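(* Let $\xi_k=I_k-(\theta(M_k)-\theta(M_{k-1}))$ for $k\ge1$. There is a positive constant $C$ such that: (a) if $\delta<0$ and $\limsup_k r_k<1$, then $E[|\xi_k|^3\mid\mathcal{F}_{k-1}]\le C\,y_{M_{k-1}}$ for all $k\ge1$; (b) if $\delta<0$, $\lim_k r_k=1$ and $\lim_k(1-r_k)/(1-r_{k-1})=1$, then $E[|\xi_k|^3\mid\mathcal{F}_{k-1}]\le C\,y_{M_{k-1}+3\delta}$ for all $k\ge1$; (c) if $\delta>0$, then $E[|\xi_k|^3\mid\mathcal{F}_{k-1}]\le C\,y_{M_{k-1}+\delta}$ for all $k\ge1$.
   Context: Let $\{X_n,n\ge1\}$ be independent, identically distributed random variables with values in $\mathbb{Z}_+=\{0,1,2,\dots\}$ such that $p_k=P[X_1=k]>0$ for every $k\in\mathbb{Z}_+$ (set $p_m=0$ for integers $m\le -1$). For $k\in\mathbb{Z}_+$ let $y_k=\sum_{i>k}p_i$, and set $y_m=1$ for integers $m\le-1$. Let $r_k=p_k/y_{k-1}$, $k\in\mathbb{Z}_+$. Fix an integer $\delta$ and define $s_k=p_{k+\delta}/y_{k-1}$ and $\theta(k)=\sum_{i=0}^k s_i$ for $k\in\mathbb{Z}_+$. Let $M_0=0$ and $M_n=\max\{X_1,\dots,X_n\}$ for $n\ge1$. Let $I_k=\mathbf{1}_{\{X_k>M_{k-1}+\delta\}}$. Let $\mathcal{F}_0=\{\emptyset,\Omega\}$ and $\mathcal{F}_n=\sigma(X_1,\dots,X_n)$ for $n\ge1$. *)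

theory Defs
  imports "HOL-Probability.Probability"
begin

definition pz :: "(nat \<Rightarrow> real) \<Rightarrow> int \<Rightarrow> real" where
  "pz p m = (if m < 0 then 0 else p (nat m))"

definition ytail :: "(nat \<Rightarrow> real) \<Rightarrow> int \<Rightarrow> real" where
  "ytail p m = (if m < 0 then 1 else (\<Sum>i. p (nat m + 1 + i)))"

definition rr :: "(nat \<Rightarrow> real) \<Rightarrow> nat \<Rightarrow> real" where
  "rr p k = p k / ytail p (int k - 1)"

definition ss :: "(nat \<Rightarrow> real) \<Rightarrow> int \<Rightarrow> nat \<Rightarrow> real" where
  "ss p \<delta> k = pz p (int k + \<delta>) / ytail p (int k - 1)"

definition theta :: "(nat \<Rightarrow> real) \<Rightarrow> int \<Rightarrow> nat \<Rightarrow> real" where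
  "theta p \<delta> k = (\<Sum>i\<le>k. ss p \<delta> i)"

definition Mx :: "(nat \<Rightarrow> 'a \<Rightarrow> nat) \<Rightarrow> nat \<Rightarrow> 'a \<Rightarrow> nat" where
  "Mx X n \<omega> = Max (insert 0 ((\<lambda>i. X i \<omega>) ` {1..n}))"

definition Ik :: "(nat \<Rightarrow> 'a \<Rightarrow> nat) \<Rightarrow> int \<Rightarrow> nat \<Rightarrow> 'a \<Rightarrow> real" where
  "Ik X \<delta> k \<omega> = (if int (X k \<omega>) > int (Mx X (k - 1) \<omega>) + \<delta> then 1 else 0)"

definition xi :: "(nat \<Rightarrow> real) \<Rightarrow> (nat \<Rightarrow> 'a \<Rightarrow> nat) \<Rightarrow> int \<Rightarrow> nat \<Rightarrow> 'a \<Rightarrow> real" where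
  "xi p X \<delta> k \<omega> = Ik X \<delta> k \<omega> - (theta p \<delta> (Mx X k \<omega>) - theta p \<delta> (Mx X (k - 1) \<omega>))"

definition natfilt :: "'a measure \<Rightarrow> (nat \<Rightarrow> 'a \<Rightarrow> nat) \<Rightarrow> nat \<Rightarrow> 'a measure" where
  "natfilt M X n = sigma (space M) (\<Union>i\<in>{1..n}. {X i -` A \<inter> space M | A. True})"

end

theory Submission
  imports Defs
begin


locale pdist =
  fixes p :: "nat \<Rightarrow> real"
  assumes ppos: "\<And>k. p k > 0" and psums: "p sums 1"
begin

lemma psummable: "summable p" using psums by (simp add: sums_iff)
lemma psum1: "suminf p = 1" using psums by (simp add: sums_iff)

lemma pz_nonneg: "pz p j \<ge> 0"
  unfolding pz_def using ppos by (simp add: less_imp_le)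

lemma ytail_pos: "ytail p j > 0"
proof (cases "j < 0")
  case False
  have "summable (\<lambda>i. p (nat j + 1 + i))"
    using psummable summable_iff_shift[of p "nat j + 1"] by (simp add: add.commute)
  then have "0 < (\<Sum>i. p (nat j + 1 + i))"
    by (rule suminf_pos) (use ppos in auto)
  then show ?thesis using False by (simp add: ytail_def)
qed (simp add: ytail_def)

lemma ytail_step: "ytail p (j - 1) = pz p j + ytail p j"
proof (cases "j < 0")
  case True then show ?thesis by (simp add: ytail_def pz_def)
next
  case False
  have s: "summable (\<lambda>i. p (nat j + i))"
    using psummable summable_iff_shift[of p "nat j"] by (simp add: add.commute)
  have e: "(\<Sum>i. p (nat j + i)) = p (nat j) + (\<Sum>i. p (nat j + 1 + i))"
    using suminf_split_head[OF s] by (simp add: add.commute add.left_commute)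
  show ?thesis
  proof (cases "j = 0")
    case True
    have "(\<Sum>i. p (0 + i)) = p 0 + (\<Sum>i. p (0 + 1 + i))" using e True by simp
    then show ?thesis using True psum1 by (simp add: ytail_def pz_def)
  next
    case False
    with \<open>\<not> j < 0\<close> have "nat (j - 1) + 1 = nat j" by simp
    then show ?thesis using e \<open>\<not> j < 0\<close> False by (simp add: ytail_def pz_def)
  qed
qed

lemma ytail_mono_step: "ytail p j \<le> ytail p (j - 1)"
  using ytail_step[of j] pz_nonneg[of j] by simp

lemma ytail_antimono: "i \<le> j \<Longrightarrow> ytail p j \<le> ytail p i"
proof -
  assume "i \<le> j"
  then obtain n where n: "j = i + int n" using zle_iff_zadd by blast
  have "ytail p (i + int n) \<le> ytail p i" for n
  proof (induction n)
    case (Suc n)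
    have "ytail p (i + int (Suc n)) \<le> ytail p (i + int (Suc n) - 1)" by (rule ytail_mono_step)
    also have "\<dots> = ytail p (i + int n)" by simp
    finally show ?case using Suc by simp
  qed simp
  then show ?thesis using n by simp
qed

lemma ytail_le1: "ytail p j \<le> 1"
  using ytail_antimono[of "-1" j] by (cases "j < -1") (auto simp: ytail_def)

lemma sum_tail_le: "(\<Sum>x<N. (if int x > j then p x else 0)) \<le> ytail p j"
proof -
  let ?f = "\<lambda>x. if int x > j then p x else 0"
  have sf: "summable ?f"
    by (rule summable_comparison_test'[OF psummable, of 0]) (use ppos in \<open>auto simp: less_imp_le\<close>)
  have "(\<Sum>x<N. ?f x) \<le> suminf ?f"
    by (rule sum_le_suminf[OF sf]) (use ppos in \<open>auto simp: less_imp_le\<close>)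
  also have "suminf ?f = ytail p j"
  proof (cases "j < 0")
    case True
    then have "?f = p" by (auto simp: fun_eq_iff)
    then show ?thesis using True psum1 by (simp add: ytail_def)
  next
    case False
    have "suminf ?f = (\<Sum>n. ?f (n + (nat j + 1))) + sum ?f {..<nat j + 1}"
      by (rule suminf_split_initial_segment[OF sf])
    also have "sum ?f {..<nat j + 1} = 0" using False by (intro sum.neutral) auto
    also have "(\<lambda>n. ?f (n + (nat j + 1))) = (\<lambda>i. p (nat j + 1 + i))"
      using False by (auto simp: fun_eq_iff add.commute)
    finally show ?thesis using False by (simp add: ytail_def)
  qed
  finally show ?thesis .
qed

end

lemma power_diff_le:
  fixes a b :: real
  assumes "0 \<le> b" "b \<le> a"
  shows "a ^ Suc n - b ^ Suc n \<le> Suc n * (a - b) * a ^ n"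
proof -
  have "a ^ Suc n - b ^ Suc n = (a - b) * (\<Sum>i<Suc n. b ^ (Suc n - Suc i) * a ^ i)"
    by (rule power_diff_sumr2)
  also have "(\<Sum>i<Suc n. b ^ (Suc n - Suc i) * a ^ i) \<le> (\<Sum>i<Suc n. a ^ n)"
  proof (rule sum_mono)
    fix i assume "i \<in> {..<Suc n}"
    then have "b ^ (n - i) * a ^ i \<le> a ^ (n - i) * a ^ i"
      using assms by (intro mult_right_mono power_mono) auto
    also have "\<dots> = a ^ n" using \<open>i \<in> {..<Suc n}\<close> by (simp add: power_add[symmetric])
    finally show "b ^ (Suc n - Suc i) * a ^ i \<le> a ^ n" by simp
  qed
  finally have "a ^ Suc n - b ^ Suc n \<le> (a - b) * (\<Sum>i<Suc n. a ^ n)"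
    using assms by (simp add: mult_left_mono)
  then show ?thesis by (simp add: algebra_simps)
qed

lemma abel_ineq:
  fixes Y s D :: "nat \<Rightarrow> real"
  assumes Y0: "\<And>x. 0 \<le> Y x" and s0: "\<And>x. 0 \<le> s x" and Dm: "D m = 0"
    and Ds: "\<And>x. x \<ge> m \<Longrightarrow> D (Suc x) = D x + s (Suc x)"
  shows "(\<Sum>x\<in>{m..<N}. (Y x - Y (Suc x)) * D (Suc x) ^ Suc n)
          \<le> Suc n * (\<Sum>x\<in>{m..<N}. Y x * s (Suc x) * D (Suc x) ^ n)"
proof -
  have D0: "x \<ge> m \<Longrightarrow> D x \<ge> 0" for x
  proof (induction x rule: dec_induct)
    case base then show ?case using Dm by simp
  next
    case (step x) then show ?case using Ds[of x] s0[of "Suc x"] by simp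
  qed
  have eq: "N \<ge> m \<Longrightarrow> (\<Sum>x\<in>{m..<N}. (Y x - Y (Suc x)) * D (Suc x) ^ Suc n) + Y N * D N ^ Suc n
        = (\<Sum>x\<in>{m..<N}. Y x * (D (Suc x) ^ Suc n - D x ^ Suc n))"
  proof (induction N rule: dec_induct)
    case base then show ?case using Dm by simp
  next
    case (step N)
    then show ?case by (simp add: algebra_simps)
  qed
  show ?thesis
  proof (cases "N \<ge> m")
    case True
    have "(\<Sum>x\<in>{m..<N}. (Y x - Y (Suc x)) * D (Suc x) ^ Suc n)
        \<le> (\<Sum>x\<in>{m..<N}. (Y x - Y (Suc x)) * D (Suc x) ^ Suc n) + Y N * D N ^ Suc n"
      using Y0[of N] D0[OF True] by simp
    also have "\<dots> = (\<Sum>x\<in>{m..<N}. Y x * (D (Suc x) ^ Suc n - D x ^ Suc n))" using eq True by simp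
    also have "\<dots> \<le> (\<Sum>x\<in>{m..<N}. Y x * (Suc n * s (Suc x) * D (Suc x) ^ n))"
    proof (rule sum_mono)
      fix x assume "x \<in> {m..<N}"
      then have "x \<ge> m" by simp
      have "D (Suc x) ^ Suc n - D x ^ Suc n \<le> Suc n * (D (Suc x) - D x) * D (Suc x) ^ n"
        by (rule power_diff_le) (use D0[OF \<open>x \<ge> m\<close>] Ds[OF \<open>x \<ge> m\<close>] s0[of "Suc x"] in auto)
      then show "Y x * (D (Suc x) ^ Suc n - D x ^ Suc n) \<le> Y x * (Suc n * s (Suc x) * D (Suc x) ^ n)"
        using Ds[OF \<open>x \<ge> m\<close>] by (intro mult_left_mono) (auto simp: Y0)
    qed
    also have "\<dots> = Suc n * (\<Sum>x\<in>{m..<N}. Y x * s (Suc x) * D (Suc x) ^ n)"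
      by (simp add: sum_distrib_left algebra_simps)
    finally show ?thesis .
  qed simp
qed




lemma telescope_le:
  fixes Y :: "nat \<Rightarrow> real"
  assumes "\<And>x. 0 \<le> Y x"
  shows "(\<Sum>x\<in>{m..<N}. (Y x - Y (Suc x))) \<le> Y m"
proof (cases "m \<le> N")
  case True
  have "(\<Sum>x\<in>{m..<N}. (Y x - Y (Suc x))) = Y m - Y N"
    using True by (induction N rule: dec_induct) auto
  then show ?thesis using assms[of N] by simp
qed (use assms in auto)

context pdist
begin

definition DD :: "int \<Rightarrow> nat \<Rightarrow> nat \<Rightarrow> real" where
  "DD \<delta> m x = theta p \<delta> (max m x) - theta p \<delta> m"

lemma ss_nonneg: "ss p \<delta> x \<ge> 0"
  unfolding ss_def using pz_nonneg ytail_pos by (simp add: less_imp_le)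

lemma DD_m: "DD \<delta> m m = 0" by (simp add: DD_def)
lemma DD_Suc: "x \<ge> m \<Longrightarrow> DD \<delta> m (Suc x) = DD \<delta> m x + ss p \<delta> (Suc x)"
  by (simp add: DD_def theta_def max_def)
lemma DD_nonneg: "DD \<delta> m x \<ge> 0"
proof (cases "x \<ge> m")
  case True then show ?thesis
    by (induction x rule: dec_induct) (auto simp: DD_m DD_Suc ss_nonneg)
qed (simp add: DD_def)
lemma DD_le: "x \<le> m \<Longrightarrow> DD \<delta> m x = 0" by (simp add: DD_def)

lemma ss_Suc: "ytail p (int x) * ss p \<delta> (Suc x) = pz p (int x + 1 + \<delta>)"
  using ytail_pos[of "int x"] by (simp add: ss_def add.commute add.left_commute)

lemma p_Suc: "p (Suc x) = ytail p (int x) - ytail p (int x + 1)"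
proof -
  have e: "nat (int x + 1) = Suc x" using nat_int[of "Suc x"] by simp
  show ?thesis using ytail_step[of "int x + 1"] by (simp add: pz_def e)
qed

lemma chain:
  fixes Y1 Y2 :: "nat \<Rightarrow> real" and c1 c2 :: real
  assumes Y1: "\<And>x. 0 \<le> Y1 x" and Y2: "\<And>x. 0 \<le> Y2 x"
    and c1: "c1 \<ge> 0" and c2: "c2 \<ge> 0"
    and h1: "\<And>x. x \<ge> m \<Longrightarrow> (ytail p (int x + \<delta>) / ytail p (int x)) * pz p (int x + 1 + \<delta>) \<le> c1 * (Y1 x - Y1 (Suc x))"
    and h2: "\<And>x. x \<ge> m \<Longrightarrow> (Y1 x / ytail p (int x)) * pz p (int x + 1 + \<delta>) \<le> c2 * (Y2 x - Y2 (Suc x))"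
  shows "(\<Sum>x\<in>{m..<N}. p (Suc x) * DD \<delta> m (Suc x) ^ 3) \<le> 6 * c1 * c2 * Y2 m"
proof -
  let ?D = "DD \<delta> m" and ?s = "ss p \<delta>"
  have ab: "\<And>Y n. (\<And>x. 0 \<le> Y x) \<Longrightarrow> (\<Sum>x\<in>{m..<N}. (Y x - Y (Suc x)) * ?D (Suc x) ^ Suc n)
          \<le> Suc n * (\<Sum>x\<in>{m..<N}. Y x * ?s (Suc x) * ?D (Suc x) ^ n)"
    by (rule abel_ineq) (auto simp: ss_nonneg DD_m DD_Suc)
  have "(\<Sum>x\<in>{m..<N}. p (Suc x) * ?D (Suc x) ^ 3)
      = (\<Sum>x\<in>{m..<N}. (ytail p (int x) - ytail p (int (Suc x))) * ?D (Suc x) ^ Suc 2)"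
    by (simp add: p_Suc add.commute)
  also have "\<dots> \<le> Suc 2 * (\<Sum>x\<in>{m..<N}. ytail p (int x) * ?s (Suc x) * ?D (Suc x) ^ 2)"
    by (rule ab) (simp add: less_imp_le ytail_pos)
  finally have S1: "(\<Sum>x\<in>{m..<N}. p (Suc x) * ?D (Suc x) ^ 3) \<le> 3 * (\<Sum>x\<in>{m..<N}. ytail p (int x) * ?s (Suc x) * ?D (Suc x) ^ 2)"
    by simp
  have "(\<Sum>x\<in>{m..<N}. ytail p (int x) * ?s (Suc x) * ?D (Suc x) ^ 2)
      = (\<Sum>x\<in>{m..<N}. (ytail p (int x + \<delta>) - ytail p (int (Suc x) + \<delta>)) * ?D (Suc x) ^ Suc 1)"
  proof (rule sum.cong)
    fix x
    have "ytail p (int x + \<delta>) = pz p (int x + 1 + \<delta>) + ytail p (int x + 1 + \<delta>)"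
      using ytail_step[of "int x + 1 + \<delta>"] by simp
    then show "ytail p (int x) * ?s (Suc x) * ?D (Suc x) ^ 2
      = (ytail p (int x + \<delta>) - ytail p (int (Suc x) + \<delta>)) * ?D (Suc x) ^ Suc 1"
      by (simp add: ss_Suc add.commute add.left_commute power2_eq_square)
  qed simp
  also have "\<dots> \<le> Suc 1 * (\<Sum>x\<in>{m..<N}. ytail p (int x + \<delta>) * ?s (Suc x) * ?D (Suc x) ^ 1)"
    by (rule ab) (simp add: less_imp_le ytail_pos)
  finally have S2: "(\<Sum>x\<in>{m..<N}. ytail p (int x) * ?s (Suc x) * ?D (Suc x) ^ 2) \<le> 2 * (\<Sum>x\<in>{m..<N}. ytail p (int x + \<delta>) * ?s (Suc x) * ?D (Suc x) ^ 1)"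
    by simp
  have "(\<Sum>x\<in>{m..<N}. ytail p (int x + \<delta>) * ?s (Suc x) * ?D (Suc x) ^ 1)
      \<le> (\<Sum>x\<in>{m..<N}. c1 * ((Y1 x - Y1 (Suc x)) * ?D (Suc x) ^ Suc 0))"
  proof (rule sum_mono)
    fix x assume "x \<in> {m..<N}"
    then have xm: "x \<ge> m" by simp
    have "ytail p (int x + \<delta>) * ?s (Suc x) = (ytail p (int x + \<delta>) / ytail p (int x)) * pz p (int x + 1 + \<delta>)"
      using ss_Suc[of x \<delta>] ytail_pos[of "int x"] by (simp add: field_simps)
    then show "ytail p (int x + \<delta>) * ?s (Suc x) * ?D (Suc x) ^ 1 \<le> c1 * ((Y1 x - Y1 (Suc x)) * ?D (Suc x) ^ Suc 0)"
      using mult_right_mono[OF h1[OF xm] DD_nonneg[of \<delta> m "Suc x"]] by (simp add: algebra_simps)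
  qed
  also have "\<dots> = c1 * (\<Sum>x\<in>{m..<N}. (Y1 x - Y1 (Suc x)) * ?D (Suc x) ^ Suc 0)"
    by (simp add: sum_distrib_left)
  also have "\<dots> \<le> c1 * (Suc 0 * (\<Sum>x\<in>{m..<N}. Y1 x * ?s (Suc x) * ?D (Suc x) ^ 0))"
    by (rule mult_left_mono[OF ab c1]) (rule Y1)
  finally have S3: "(\<Sum>x\<in>{m..<N}. ytail p (int x + \<delta>) * ?s (Suc x) * ?D (Suc x) ^ 1) \<le> c1 * (\<Sum>x\<in>{m..<N}. Y1 x * ?s (Suc x))"
    by simp
  have "(\<Sum>x\<in>{m..<N}. Y1 x * ?s (Suc x)) \<le> (\<Sum>x\<in>{m..<N}. c2 * (Y2 x - Y2 (Suc x)))"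
  proof (rule sum_mono)
    fix x assume "x \<in> {m..<N}"
    then have xm: "x \<ge> m" by simp
    have "Y1 x * ?s (Suc x) = (Y1 x / ytail p (int x)) * pz p (int x + 1 + \<delta>)"
      using ss_Suc[of x \<delta>] ytail_pos[of "int x"] by (simp add: field_simps)
    then show "Y1 x * ?s (Suc x) \<le> c2 * (Y2 x - Y2 (Suc x))"
      using h2[OF xm] by simp
  qed
  also have "\<dots> = c2 * (\<Sum>x\<in>{m..<N}. (Y2 x - Y2 (Suc x)))" by (simp add: sum_distrib_left)
  also have "\<dots> \<le> c2 * Y2 m"
    by (rule mult_left_mono[OF telescope_le c2]) (rule Y2)
  finally have S4: "(\<Sum>x\<in>{m..<N}. Y1 x * ?s (Suc x)) \<le> c2 * Y2 m" .
  have "(\<Sum>x\<in>{m..<N}. p (Suc x) * ?D (Suc x) ^ 3) \<le> 3 * (2 * (c1 * (c2 * Y2 m)))"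
    using S1 S2 mult_left_mono[OF S3, of 2] mult_left_mono[OF S4 c1] by linarith
  then show ?thesis by (simp add: algebra_simps)
qed

end



lemma ennreal_suminf_bound:
  fixes f :: "nat \<Rightarrow> real"
  assumes "\<And>x. 0 \<le> f x" "\<And>N. (\<Sum>x<N. f x) \<le> B"
  shows "(\<Sum>x. ennreal (f x)) \<le> ennreal B"
proof -
  have s: "summable f" by (rule summableI_nonneg_bounded[OF assms])
  have "(\<Sum>x. ennreal (f x)) = ennreal (suminf f)" by (rule suminf_ennreal2[OF assms(1) s])
  also have "\<dots> \<le> ennreal B" by (rule ennreal_leI, rule suminf_le_const[OF s assms(2)])
  finally show ?thesis .
qed

context pdist
begin

definition GG :: "int \<Rightarrow> nat \<Rightarrow> nat \<Rightarrow> real" where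
  "GG \<delta> m x = (if int x > int m + \<delta> then 1 else 0) - DD \<delta> m x"

lemma cube_bound: "\<bar>GG \<delta> m x\<bar> ^ 3 \<le> (if int x > int m + \<delta> then 1 else 0) + DD \<delta> m x ^ 3"
proof -
  have D0: "DD \<delta> m x \<ge> 0" by (rule DD_nonneg)
  have D3: "DD \<delta> m x ^ 3 \<ge> 0" using D0 by simp
  show ?thesis
  proof (cases "int x > int m + \<delta>")
    case True
    show ?thesis
    proof (cases "DD \<delta> m x \<le> 1")
      case True
      then have "\<bar>1 - DD \<delta> m x\<bar> \<le> 1" using D0 by simp
      then have "\<bar>1 - DD \<delta> m x\<bar> ^ 3 \<le> 1" using power_mono[of "\<bar>1 - DD \<delta> m x\<bar>" 1 3] by simp
      moreover have "\<bar>GG \<delta> m x\<bar> ^ 3 = \<bar>1 - DD \<delta> m x\<bar> ^ 3" using \<open>int x > int m + \<delta>\<close> by (simp add: GG_def)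
      ultimately have "\<bar>GG \<delta> m x\<bar> ^ 3 \<le> 1 + DD \<delta> m x ^ 3" using D3 by linarith
      then show ?thesis using \<open>int x > int m + \<delta>\<close> by simp
    next
      case False
      then have "\<bar>1 - DD \<delta> m x\<bar> \<le> DD \<delta> m x" by simp
      then have "\<bar>1 - DD \<delta> m x\<bar> ^ 3 \<le> DD \<delta> m x ^ 3" by (intro power_mono) auto
      then show ?thesis using \<open>int x > int m + \<delta>\<close> by (simp add: GG_def)
    qed
  next
    case False then show ?thesis using D0 by (simp add: GG_def)
  qed
qed

lemma partial_bound:
  fixes YA YB :: "nat \<Rightarrow> real" and ca cb :: real
  assumes YA: "\<And>x. 0 \<le> YA x" and YB: "\<And>x. 0 \<le> YB x"
    and ca: "ca \<ge> 0" and cb: "cb \<ge> 0"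
    and h1: "\<And>x. x \<ge> m \<Longrightarrow> (ytail p (int x + \<delta>) / ytail p (int x)) * pz p (int x + 1 + \<delta>) \<le> ca * (YA x - YA (Suc x))"
    and h2: "\<And>x. x \<ge> m \<Longrightarrow> (YA x / ytail p (int x)) * pz p (int x + 1 + \<delta>) \<le> cb * (YB x - YB (Suc x))"
  shows "(\<Sum>x. ennreal (p x * \<bar>GG \<delta> m x\<bar> ^ 3)) \<le> ennreal (ytail p (int m + \<delta>) + 6 * ca * cb * YB m)"
proof (rule ennreal_suminf_bound)
  fix x show "0 \<le> p x * \<bar>GG \<delta> m x\<bar> ^ 3" using ppos[of x] by simp
next
  fix N
  let ?f = "\<lambda>x. p x * DD \<delta> m x ^ 3"
  have "(\<Sum>x<N. p x * \<bar>GG \<delta> m x\<bar> ^ 3) \<le> (\<Sum>x<N. (if int x > int m + \<delta> then p x else 0) + ?f x)"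
  proof (rule sum_mono)
    fix x
    have "p x * \<bar>GG \<delta> m x\<bar> ^ 3 \<le> p x * ((if int x > int m + \<delta> then 1 else 0) + DD \<delta> m x ^ 3)"
      by (rule mult_left_mono[OF cube_bound]) (use ppos[of x] in simp)
    then show "p x * \<bar>GG \<delta> m x\<bar> ^ 3 \<le> (if int x > int m + \<delta> then p x else 0) + ?f x"
      by (simp add: algebra_simps split: if_splits)
  qed
  also have "\<dots> = (\<Sum>x<N. (if int x > int m + \<delta> then p x else 0)) + (\<Sum>x<N. ?f x)"
    by (rule sum.distrib)
  also have "(\<Sum>x<N. ?f x) \<le> (\<Sum>x\<in>{m..<N}. p (Suc x) * DD \<delta> m (Suc x) ^ 3)"
  proof -
    have f0: "?f x \<ge> 0" for x using ppos[of x] DD_nonneg[of \<delta> m x] by simp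
    have "(\<Sum>x<N. ?f x) \<le> (\<Sum>x<Suc N. ?f x)" using f0 by (simp add: sum.lessThan_Suc)
    also have "\<dots> = ?f 0 + (\<Sum>x<N. ?f (Suc x))" by (rule sum.lessThan_Suc_shift)
    also have "?f 0 = 0" by (simp add: DD_le)
    also have "(\<Sum>x<N. ?f (Suc x)) = (\<Sum>x\<in>{m..<N}. ?f (Suc x))"
      by (rule sum.mono_neutral_right) (auto simp: DD_le)
    finally show ?thesis by simp
  qed
  also have "\<dots> \<le> 6 * ca * cb * YB m"
    by (rule chain[OF YA YB ca cb h1 h2])
  finally show "(\<Sum>x<N. p x * \<bar>GG \<delta> m x\<bar> ^ 3) \<le> ytail p (int m + \<delta>) + 6 * ca * cb * YB m"
    using sum_tail_le[where j="int m + \<delta>" and N=N] by linarith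
qed

lemma case_c:
  assumes "\<delta> > 0"
  shows "(\<Sum>x. ennreal (p x * \<bar>GG \<delta> m x\<bar> ^ 3)) \<le> ennreal (7 * ytail p (int m + \<delta>))"
proof -
  let ?Y = "\<lambda>x::nat. ytail p (int x + \<delta>)"
  have h: "(ytail p (int x + \<delta>) / ytail p (int x)) * pz p (int x + 1 + \<delta>) \<le> 1 * (?Y x - ?Y (Suc x))" for x
  proof -
    have r: "ytail p (int x + \<delta>) / ytail p (int x) \<le> 1"
      using ytail_antimono[of "int x" "int x + \<delta>"] assms ytail_pos[of "int x"] by simp
    have "?Y x = pz p (int x + 1 + \<delta>) + ?Y (Suc x)"
      using ytail_step[of "int x + 1 + \<delta>"] by (simp add: add.commute add.left_commute)
    then show ?thesis using mult_right_mono[OF r pz_nonneg] by simp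
  qed
  have h2: "(?Y x / ytail p (int x)) * pz p (int x + 1 + \<delta>) \<le> 1 * (?Y x - ?Y (Suc x))" for x
    using h by simp
  have "(\<Sum>x. ennreal (p x * \<bar>GG \<delta> m x\<bar> ^ 3)) \<le> ennreal (ytail p (int m + \<delta>) + 6 * 1 * 1 * ?Y m)"
    by (rule partial_bound[where YA = ?Y and YB = ?Y]) (use h h2 in \<open>auto simp: less_imp_le ytail_pos\<close>)
  then show ?thesis by simp
qed

lemma ytail_rr: "ytail p (int k) = (1 - rr p k) * ytail p (int k - 1)"
proof -
  have "ytail p (int k - 1) = p k + ytail p (int k)"
    using ytail_step[of "int k"] by (simp add: pz_def)
  then show ?thesis using ytail_pos[of "int k - 1"] by (simp add: rr_def field_simps)
qed

lemma rr_lt1: "rr p k < 1"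
proof -
  have "ytail p (int k) > 0" by (rule ytail_pos)
  then have "(1 - rr p k) * ytail p (int k - 1) > 0" using ytail_rr by simp
  then show ?thesis using ytail_pos[of "int k - 1"] by (simp add: zero_less_mult_iff)
qed

lemma rr_pos: "rr p k > 0"
  unfolding rr_def using ppos ytail_pos by simp

lemma case_a:
  assumes "\<delta> < 0" and ls: "limsup (\<lambda>k. ereal (rr p k)) < 1"
  shows "\<exists>C>0. \<forall>m. (\<Sum>x. ennreal (p x * \<bar>GG \<delta> m x\<bar> ^ 3)) \<le> ennreal (C * ytail p (int m))"
proof -
  obtain z where z1: "limsup (\<lambda>k. ereal (rr p k)) < ereal z" and z2: "ereal z < 1"
    using ereal_dense2[OF ls] by blast
  have "eventually (\<lambda>k. ereal (rr p k) < ereal z) sequentially"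
    by (rule Limsup_lessD[OF z1])
  then obtain N where N: "\<And>k. k \<ge> N \<Longrightarrow> rr p k < z" by (auto simp: eventually_sequentially)
  define \<rho> where "\<rho> = Max (insert z (rr p ` {..<N}))"
  have \<rho>1: "\<rho> < 1" unfolding \<rho>_def using z2 rr_lt1 by (auto simp: Max_less_iff)
  have rr\<rho>: "rr p k \<le> \<rho>" for k
  proof (cases "k < N")
    case True then show ?thesis unfolding \<rho>_def by (intro Max_ge) auto
  next
    case False then have "rr p k < z" using N by simp
    moreover have "z \<le> \<rho>" unfolding \<rho>_def by (intro Max_ge) auto
    ultimately show ?thesis by simp
  qed
  have \<rho>0: "\<rho> \<ge> 0" using rr\<rho>[of 0] rr_pos[of 0] by simp
  define K0 where "K0 = 1 / (1 - \<rho>)"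
  have K0: "K0 \<ge> 1" using \<rho>1 \<rho>0 by (simp add: K0_def)
  have step: "ytail p (i - 1) \<le> K0 * ytail p i" for i
  proof (cases "i < 0")
    case True then show ?thesis using K0 by (simp add: ytail_def)
  next
    case False
    then obtain k where k: "i = int k" by (metis nonneg_int_cases not_less)
    have "ytail p (int k) \<ge> (1 - \<rho>) * ytail p (int k - 1)"
      using ytail_rr[of k] rr\<rho>[of k] ytail_pos[of "int k - 1"] by (simp add: mult_right_mono)
    then show ?thesis using k \<rho>1 by (simp add: K0_def field_simps)
  qed
  define d where "d = nat (- \<delta>)"
  have dd: "\<delta> = - int d" using assms by (simp add: d_def)
  have iter: "ytail p (j - int L) \<le> K0 ^ L * ytail p j" for j L
  proof (induction L)
    case (Suc L)
    have "j - int (Suc L) = (j - int L) - 1" by simp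
    then have "ytail p (j - int (Suc L)) = ytail p ((j - int L) - 1)" by (rule arg_cong)
    also have "\<dots> \<le> K0 * ytail p (j - int L)" by (rule step)
    also have "\<dots> \<le> K0 * (K0 ^ L * ytail p j)" using Suc K0 by (intro mult_left_mono) auto
    finally show ?case by simp
  qed simp
  define K where "K = K0 ^ d"
  have K: "K \<ge> 1" using K0 by (simp add: K_def)
  have Kb: "ytail p (j + \<delta>) \<le> K * ytail p j" for j
    using iter[of j d] by (simp add: K_def dd)
  let ?Y = "\<lambda>x::nat. ytail p (int x + \<delta>)"
  have h: "(ytail p (int x + \<delta>) / ytail p (int x)) * pz p (int x + 1 + \<delta>) \<le> K * (?Y x - ?Y (Suc x))" for x
  proof -
    have r: "ytail p (int x + \<delta>) / ytail p (int x) \<le> K"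
      using Kb[of "int x"] ytail_pos[of "int x"] by (simp add: divide_le_eq)
    have "?Y x = pz p (int x + 1 + \<delta>) + ?Y (Suc x)"
      using ytail_step[of "int x + 1 + \<delta>"] by (simp add: add.commute add.left_commute)
    then show ?thesis using mult_right_mono[OF r pz_nonneg] by simp
  qed
  show ?thesis
  proof (intro exI[of _ "K + 6 * K ^ 3"] conjI allI)
    show "K + 6 * K ^ 3 > 0" using K by (simp add: add_pos_pos)
    fix m
    have "(\<Sum>x. ennreal (p x * \<bar>GG \<delta> m x\<bar> ^ 3)) \<le> ennreal (ytail p (int m + \<delta>) + 6 * K * K * ?Y m)"
      by (rule partial_bound[where YA = ?Y and YB = ?Y]) (use h K in \<open>auto simp: less_imp_le ytail_pos\<close>)
    also have "ytail p (int m + \<delta>) + 6 * K * K * ?Y m \<le> (K + 6 * K ^ 3) * ytail p (int m)"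
    proof -
      have a: "ytail p (int m + \<delta>) \<le> K * ytail p (int m)" by (rule Kb)
      have "6 * K * K * ?Y m \<le> 6 * K * K * (K * ytail p (int m))"
        using a K by (intro mult_left_mono) auto
      then show ?thesis using a by (simp add: algebra_simps power3_eq_cube)
    qed
    finally show "(\<Sum>x. ennreal (p x * \<bar>GG \<delta> m x\<bar> ^ 3)) \<le> ennreal ((K + 6 * K ^ 3) * ytail p (int m))"
      by (simp add: ennreal_leI order_trans)
  qed
qed

end



lemma fin_exc:
  fixes f g q :: "nat \<Rightarrow> real"
  assumes c: "c > 0" and g: "\<And>x. g x \<ge> 0" and ev: "\<And>x. x \<ge> N \<Longrightarrow> f x \<le> c * g x"
    and q: "\<And>x. q x > 0"
  shows "\<exists>A\<ge>0. \<forall>x. f x \<le> c * (g x + A * q x)"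
proof -
  define A where "A = (\<Sum>x<N. max 0 (f x) / (c * q x))"
  have A0: "A \<ge> 0" unfolding A_def using c q by (intro sum_nonneg) (simp add: less_imp_le)
  have "f x \<le> c * (g x + A * q x)" for x
  proof (cases "x < N")
    case True
    have t: "max 0 (f x) / (c * q x) \<le> A"
      unfolding A_def using True c q
      by (intro member_le_sum) (auto simp: less_imp_le)
    have "f x \<le> max 0 (f x)" by simp
    also have "\<dots> = c * (max 0 (f x) / (c * q x)) * q x" using c q[of x] by (simp add: field_simps)
    also have "\<dots> \<le> c * A * q x" using t c q[of x] by (intro mult_right_mono mult_left_mono) auto
    also have "\<dots> \<le> c * (g x + A * q x)" using g[of x] c by (simp add: algebra_simps)
    finally show ?thesis .
  next
    case False
    then have "f x \<le> c * g x" using ev by simp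
    also have "\<dots> \<le> c * (g x + A * q x)" using A0 q[of x] c by (intro mult_left_mono) auto
    finally show ?thesis .
  qed
  then show ?thesis using A0 by blast
qed

lemma ratio_shift:
  fixes Q :: "nat \<Rightarrow> real"
  assumes Q: "\<And>k. Q k > 0" and lim: "(\<lambda>k. Q (Suc k) / Q k) \<longlonglongrightarrow> 1"
  shows "(\<lambda>k. Q (k + L) / Q k) \<longlonglongrightarrow> 1"
proof (induction L)
  case 0
  have "(\<lambda>k. Q (k + 0) / Q k) = (\<lambda>k. 1)"
  proof (rule ext)
    fix k show "Q (k + 0) / Q k = 1" using Q[of k] by simp
  qed
  then show ?case by simp
next
  case (Suc L)
  have a: "(\<lambda>k. Q (Suc (k + L)) / Q (k + L)) \<longlonglongrightarrow> 1"
    using LIMSEQ_ignore_initial_segment[OF lim, of L] by simp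
  have "(\<lambda>k. Q (Suc (k + L)) / Q (k + L) * (Q (k + L) / Q k)) \<longlonglongrightarrow> 1 * 1"
    by (rule tendsto_mult[OF a Suc])
  moreover have "(\<lambda>k. Q (Suc (k + L)) / Q (k + L) * (Q (k + L) / Q k)) = (\<lambda>k. Q (k + Suc L) / Q k)"
  proof (rule ext)
    fix k
    have "Q (k + L) \<noteq> 0" using Q[of "k + L"] by simp
    then show "Q (Suc (k + L)) / Q (k + L) * (Q (k + L) / Q k) = Q (k + Suc L) / Q k" by simp
  qed
  ultimately show ?case by simp
qed

context pdist
begin

lemma case_b:
  assumes dneg: "\<delta> < 0" and r1: "rr p \<longlonglongrightarrow> 1"
    and rq: "(\<lambda>k. (1 - rr p (Suc k)) / (1 - rr p k)) \<longlonglongrightarrow> 1"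
  shows "\<exists>C>0. \<forall>m. (\<Sum>x. ennreal (p x * \<bar>GG \<delta> m x\<bar> ^ 3)) \<le> ennreal (C * ytail p (int m + 3 * \<delta>))"
proof -
  define d where "d = nat (- \<delta>)"
  have dd: "\<delta> = - int d" using dneg by (simp add: d_def)
  define Q where "Q k = 1 - rr p k" for k
  define y where "y n = ytail p (int n)" for n
  have Qpos: "Q k > 0" for k using rr_lt1[of k] by (simp add: Q_def)
  have y0: "y n > 0" for n by (simp add: y_def ytail_pos)
  have yQ: "y (Suc j) = Q (Suc j) * y j" for j
  proof -
    have e: "int (Suc j) - 1 = int j" by simp
    show ?thesis unfolding y_def Q_def by (subst ytail_rr) (simp only: e)
  qed
  have pS: "p (Suc j) = y j - y (Suc j)" for j
  proof -
    have e: "int (Suc j) = int j + 1" by simp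
    show ?thesis unfolding y_def e by (rule p_Suc)
  qed
  have ymono: "i \<le> j \<Longrightarrow> y j \<le> y i" for i j by (simp add: y_def ytail_antimono)
  have "(\<lambda>k. Q (k + d) / Q k) \<longlonglongrightarrow> 1"
    by (rule ratio_shift[OF Qpos]) (use rq in \<open>simp add: Q_def\<close>)
  then have "eventually (\<lambda>k. Q (k + d) / Q k > 1/2) sequentially"
    by (rule order_tendstoD) simp
  then obtain N1 where N1: "\<And>k. k \<ge> N1 \<Longrightarrow> Q (k + d) / Q k > 1/2"
    by (auto simp: eventually_sequentially)
  have w1: "y (j + 1) * y (j + d) \<le> 2 * y j * y (j + d + 1)" if "j \<ge> N1" for j
  proof -
    have "Q (Suc j + d) / Q (Suc j) > 1/2" using N1[of "Suc j"] that by simp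
    then have "Q (Suc j) < 2 * Q (Suc (j + d))" using Qpos[of "Suc j"] by (simp add: field_simps)
    then have "Q (Suc j) * (y j * y (j + d)) \<le> 2 * Q (Suc (j + d)) * (y j * y (j + d))"
      using y0 by (intro mult_right_mono) (auto simp: less_imp_le)
    then show ?thesis using yQ[of j] yQ[of "j + d"] by (simp add: algebra_simps)
  qed
  have win: "y (j + L) * y (j + d) \<le> 2 ^ L * y j * y (j + d + L)" if "j \<ge> N1" for j L
  proof (induction L)
    case 0 then show ?case by simp
  next
    case (Suc L)
    have h: "y (j + L + 1) * y (j + L + d) \<le> 2 * y (j + L) * y (j + L + d + 1)"
      using w1[of "j + L"] that by simp
    have "y (j + Suc L) * y (j + d) * (y (j + L) * y (j + L + d))
        = (y (j + L + 1) * y (j + L + d)) * (y (j + L) * y (j + d))" by (simp add: algebra_simps)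
    also have "\<dots> \<le> (2 * y (j + L) * y (j + L + d + 1)) * (2 ^ L * y j * y (j + d + L))"
      by (rule mult_mono[OF h Suc]) (use y0 in \<open>auto intro!: mult_nonneg_nonneg simp: less_imp_le\<close>)
    also have "\<dots> = (2 ^ Suc L * y j * y (j + d + Suc L)) * (y (j + L) * y (j + L + d))"
      by (simp add: algebra_simps)
    finally show ?case using y0 by (simp add: mult_le_cancel_right)
  qed
  have "(\<lambda>k. Q k) \<longlonglongrightarrow> 0"
    using tendsto_diff[OF tendsto_const[of 1] r1] by (simp add: Q_def[abs_def])
  then have "eventually (\<lambda>k. Q k < 1/2) sequentially"
    by (rule order_tendstoD) simp
  then obtain N2 where N2: "\<And>k. k \<ge> N2 \<Longrightarrow> Q k < 1/2" by (auto simp: eventually_sequentially)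
  have plow: "y n \<le> 2 * p (Suc n)" if "n \<ge> N2" for n
  proof -
    have "Q (Suc n) < 1/2" using N2 that by simp
    then have "Q (Suc n) * y n \<le> 1/2 * y n" using y0[of n] by (intro mult_right_mono) auto
    then show ?thesis using pS[of n] yQ[of n] by simp
  qed
  define N0 where "N0 = max N1 N2"
  have pup: "p (Suc j) \<le> y j" for j using pS[of j] y0[of "Suc j"] by simp
  have A1: "y (n + d) * p (n + d + 1) / y (n + 2 * d) \<le> 2 ^ (d + 1) * p (n + 1)" if "n \<ge> N0" for n
  proof -
    have "y (n + d) * p (n + d + 1) \<le> y (n + d) * y (n + d)"
      using pup[of "n + d"] y0 by (intro mult_left_mono) (auto simp: less_imp_le)
    also have "\<dots> \<le> 2 ^ d * y n * y (n + d + d)" using win[of n d] that by (simp add: N0_def)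
    moreover have e: "n + 2 * d = n + d + d" by simp
    ultimately have "y (n + d) * p (n + d + 1) / y (n + 2 * d) \<le> 2 ^ d * y n"
      using y0[of "n + d + d"] by (simp only: e divide_le_eq) simp
    also have "\<dots> \<le> 2 ^ d * (2 * p (Suc n))" using plow[of n] that by (simp add: N0_def)
    finally show ?thesis by simp
  qed
  have A2: "y (n + d) * p (n + 2 * d + 1) / y (n + 3 * d) \<le> 2 ^ (2 * d + 1) * p (n + 1)" if "n \<ge> N0" for n
  proof -
    have "y (n + d) * p (n + 2 * d + 1) \<le> y (n + d) * y (n + 2 * d)"
      using pup[of "n + 2 * d"] y0 by (intro mult_left_mono) (auto simp: less_imp_le)
    also have "\<dots> = y (n + 2 * d) * y (n + d)" by simp
    also have "\<dots> \<le> 2 ^ (2 * d) * y n * y (n + d + 2 * d)" using win[of n "2 * d"] that by (simp add: N0_def)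
    finally have "y (n + d) * p (n + 2 * d + 1) / y (n + 3 * d) \<le> 2 ^ (2 * d) * y n"
      using y0 by (simp add: divide_le_eq algebra_simps)
    also have "\<dots> \<le> 2 ^ (2 * d) * (2 * p (Suc n))" using plow[of n] that by (simp add: N0_def)
    finally show ?thesis by simp
  qed
  have A3: "p (n + 2 * d + 1) \<le> 2 * p (n + 1)" if "n \<ge> N0" for n
    using pup[of "n + 2 * d"] ymono[of n "n + 2 * d"] plow[of n] that by (simp add: N0_def)
  have pzn: "pz p (int k) = p k" for k by (simp add: pz_def)
  have ytn: "ytail p (int k) = y k" for k by (simp add: y_def)
  have d1: "d \<ge> 1" using dneg by (simp add: d_def)
  define c1 :: real where "c1 = 2 ^ (d + 1)"
  have c1pos: "c1 > 0" by (simp add: c1_def)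
  have "\<exists>A\<ge>0. \<forall>x. (ytail p (int x + \<delta>) / ytail p (int x)) * pz p (int x + 1 + \<delta>)
      \<le> c1 * (pz p (int x + 1 + 2 * \<delta>) + A * p (Suc x))"
  proof (rule fin_exc[OF c1pos])
    fix x show "pz p (int x + 1 + 2 * \<delta>) \<ge> 0" by (rule pz_nonneg)
  next
    fix x show "p (Suc x) > 0" by (rule ppos)
  next
    fix x assume x: "x \<ge> N0 + 2 * d"
    define n where "n = x - 2 * d"
    have xn: "x = n + 2 * d" using x by (simp add: n_def)
    have e1: "int x + \<delta> = int (n + d)" using xn dd by simp
    have e2: "int x + 1 + \<delta> = int (n + d + 1)" using xn dd by simp
    have e3: "int x + 1 + 2 * \<delta> = int (n + 1)" using xn dd by simp
    have "n \<ge> N0" using x by (simp add: n_def)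
    then show "(ytail p (int x + \<delta>) / ytail p (int x)) * pz p (int x + 1 + \<delta>) \<le> c1 * pz p (int x + 1 + 2 * \<delta>)"
      unfolding e1 e2 e3 pzn ytn c1_def using A1[of n] xn by simp
  qed
  then obtain A where A0: "A \<ge> 0" and hA: "\<And>x. (ytail p (int x + \<delta>) / ytail p (int x)) * pz p (int x + 1 + \<delta>)
      \<le> c1 * (pz p (int x + 1 + 2 * \<delta>) + A * p (Suc x))" by blast
  define Y1 where "Y1 x = ytail p (int x + 2 * \<delta>) + A * y x" for x
  have Y1d: "Y1 x - Y1 (Suc x) = pz p (int x + 1 + 2 * \<delta>) + A * p (Suc x)" for x
  proof -
    have "ytail p (int x + 2 * \<delta>) = pz p (int x + 1 + 2 * \<delta>) + ytail p (int x + 1 + 2 * \<delta>)"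
      using ytail_step[of "int x + 1 + 2 * \<delta>"] by simp
    moreover have "A * y x = A * p (Suc x) + A * y (Suc x)"
      using pS[of x] by (metis add_diff_cancel_left' diff_add_cancel distrib_left)
    ultimately show ?thesis unfolding Y1_def by (simp add: algebra_simps)
  qed
  have Y1pos: "Y1 x \<ge> 0" for x unfolding Y1_def using A0 y0[of x] ytail_pos[of "int x + 2 * \<delta>"] by simp
  define c2 :: real where "c2 = 2 ^ (2 * d + 1) + 2 * A"
  have c2pos: "c2 > 0" using A0 by (simp add: c2_def add_pos_nonneg)
  have "\<exists>A'\<ge>0. \<forall>x. (Y1 x / ytail p (int x)) * pz p (int x + 1 + \<delta>)
      \<le> c2 * (pz p (int x + 1 + 3 * \<delta>) + A' * p (Suc x))"
  proof (rule fin_exc[OF c2pos])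
    fix x show "pz p (int x + 1 + 3 * \<delta>) \<ge> 0" by (rule pz_nonneg)
  next
    fix x show "p (Suc x) > 0" by (rule ppos)
  next
    fix x assume x: "x \<ge> N0 + 3 * d"
    define n where "n = x - 3 * d"
    have xn: "x = n + 3 * d" using x by (simp add: n_def)
    have e1: "int x + 2 * \<delta> = int (n + d)" using xn dd by simp
    have e2: "int x + 1 + \<delta> = int (n + 2 * d + 1)" using xn dd by simp
    have e3: "int x + 1 + 3 * \<delta> = int (n + 1)" using xn dd by simp
    have nN: "n \<ge> N0" using x by (simp add: n_def)
    have "(Y1 x / ytail p (int x)) * pz p (int x + 1 + \<delta>)
        = y (n + d) * p (n + 2 * d + 1) / y (n + 3 * d) + A * p (n + 2 * d + 1)"
      unfolding Y1_def e1 e2 ytn pzn using y0[of "n + 3 * d"] xn by (simp add: field_simps)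
    also have "\<dots> \<le> 2 ^ (2 * d + 1) * p (n + 1) + A * (2 * p (n + 1))"
      using A2[OF nN] A3[OF nN] A0 by (intro add_mono mult_left_mono) auto
    also have "\<dots> = c2 * pz p (int x + 1 + 3 * \<delta>)" unfolding e3 pzn c2_def by (simp add: algebra_simps)
    finally show "(Y1 x / ytail p (int x)) * pz p (int x + 1 + \<delta>) \<le> c2 * pz p (int x + 1 + 3 * \<delta>)" .
  qed
  then obtain A' where A'0: "A' \<ge> 0" and hA': "\<And>x. (Y1 x / ytail p (int x)) * pz p (int x + 1 + \<delta>)
      \<le> c2 * (pz p (int x + 1 + 3 * \<delta>) + A' * p (Suc x))" by blast
  define Y2 where "Y2 x = ytail p (int x + 3 * \<delta>) + A' * y x" for x
  have Y2d: "Y2 x - Y2 (Suc x) = pz p (int x + 1 + 3 * \<delta>) + A' * p (Suc x)" for x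
  proof -
    have "ytail p (int x + 3 * \<delta>) = pz p (int x + 1 + 3 * \<delta>) + ytail p (int x + 1 + 3 * \<delta>)"
      using ytail_step[of "int x + 1 + 3 * \<delta>"] by simp
    moreover have "A' * y x = A' * p (Suc x) + A' * y (Suc x)"
      using pS[of x] by (metis add_diff_cancel_left' diff_add_cancel distrib_left)
    ultimately show ?thesis unfolding Y2_def by (simp add: algebra_simps)
  qed
  have Y2pos: "Y2 x \<ge> 0" for x unfolding Y2_def using A'0 y0[of x] ytail_pos[of "int x + 3 * \<delta>"] by simp
  define C where "C = 1 + 6 * c1 * c2 * (1 + A')"
  show ?thesis
  proof (intro exI[of _ C] conjI allI)
    show "C > 0" unfolding C_def using c1pos c2pos A'0 by (simp add: add_pos_nonneg)
    fix m
    have "(\<Sum>x. ennreal (p x * \<bar>GG \<delta> m x\<bar> ^ 3)) \<le> ennreal (ytail p (int m + \<delta>) + 6 * c1 * c2 * Y2 m)"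
    proof (rule partial_bound[where YA = Y1 and YB = Y2])
      fix x show "0 \<le> Y1 x" by (rule Y1pos)
    next
      fix x show "0 \<le> Y2 x" by (rule Y2pos)
    next
      show "0 \<le> c1" using c1pos by simp
    next
      show "0 \<le> c2" using c2pos by simp
    next
      fix x show "(ytail p (int x + \<delta>) / ytail p (int x)) * pz p (int x + 1 + \<delta>) \<le> c1 * (Y1 x - Y1 (Suc x))"
        using hA[of x] Y1d[of x] by simp
    next
      fix x show "(Y1 x / ytail p (int x)) * pz p (int x + 1 + \<delta>) \<le> c2 * (Y2 x - Y2 (Suc x))"
        using hA'[of x] Y2d[of x] by simp
    qed
    also have "ytail p (int m + \<delta>) + 6 * c1 * c2 * Y2 m \<le> C * ytail p (int m + 3 * \<delta>)"
    proof -
      have a: "ytail p (int m + \<delta>) \<le> ytail p (int m + 3 * \<delta>)" using dneg by (intro ytail_antimono) simp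
      have b: "y m \<le> ytail p (int m + 3 * \<delta>)" unfolding y_def using dneg by (intro ytail_antimono) simp
      have "Y2 m \<le> (1 + A') * ytail p (int m + 3 * \<delta>)"
        unfolding Y2_def using mult_left_mono[OF b A'0] by (simp add: algebra_simps)
      then have "6 * c1 * c2 * Y2 m \<le> 6 * c1 * c2 * ((1 + A') * ytail p (int m + 3 * \<delta>))"
        using c1pos c2pos by (intro mult_left_mono) auto
      then show ?thesis using a unfolding C_def by (simp add: algebra_simps)
    qed
    finally show "(\<Sum>x. ennreal (p x * \<bar>GG \<delta> m x\<bar> ^ 3)) \<le> ennreal (C * ytail p (int m + 3 * \<delta>))"
      by (simp add: ennreal_leI order_trans)
  qed
qed

end



lemma nn_integral_split_countable:
  fixes W :: "'a \<Rightarrow> 'b::countable" and \<Phi> :: "'b \<Rightarrow> 'a \<Rightarrow> ennreal"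
  assumes W: "W \<in> measurable M (count_space UNIV)" and B: "B \<in> sets M"
    and \<Phi>: "\<And>w. \<Phi> w \<in> borel_measurable M"
  shows "(\<integral>\<^sup>+\<omega>. indicator B \<omega> * \<Phi> (W \<omega>) \<omega> \<partial>M)
       = (\<integral>\<^sup>+w. (\<integral>\<^sup>+\<omega>. indicator (B \<inter> W -` {w}) \<omega> * \<Phi> w \<omega> \<partial>M) \<partial>count_space UNIV)"
proof -
  have BW: "B \<inter> W -` {w} \<in> sets M" for w
  proof -
    have "W -` {w} \<inter> space M \<in> sets M" using W by (simp add: measurable_count_space_eq2_countable)
    moreover have "B \<inter> W -` {w} = B \<inter> (W -` {w} \<inter> space M)" using sets.sets_into_space[OF B] by auto
    ultimately show ?thesis using B by auto
  qed
  have "(\<integral>\<^sup>+w. (\<integral>\<^sup>+\<omega>. indicator (B \<inter> W -` {w}) \<omega> * \<Phi> w \<omega> \<partial>M) \<partial>count_space UNIV)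
      = (\<integral>\<^sup>+\<omega>. (\<integral>\<^sup>+w. indicator (B \<inter> W -` {w}) \<omega> * \<Phi> w \<omega> \<partial>count_space UNIV) \<partial>M)"
    by (rule nn_integral_count_space_nn_integral[symmetric]) (use BW \<Phi> in auto)
  also have "\<dots> = (\<integral>\<^sup>+\<omega>. indicator B \<omega> * \<Phi> (W \<omega>) \<omega> \<partial>M)"
  proof (rule nn_integral_cong)
    fix \<omega>
    have "(\<lambda>w. indicator (B \<inter> W -` {w}) \<omega> * \<Phi> w \<omega>) = (\<lambda>w. (indicator B \<omega> * \<Phi> (W \<omega>) \<omega>) * indicator {W \<omega>} w)"
      by (auto simp: fun_eq_iff split: split_indicator)
    then show "(\<integral>\<^sup>+w. indicator (B \<inter> W -` {w}) \<omega> * \<Phi> w \<omega> \<partial>count_space UNIV) = indicator B \<omega> * \<Phi> (W \<omega>) \<omega>"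
      by simp
  qed
  finally show ?thesis ..
qed

lemma Mx_Suc: "Mx X (Suc n) \<omega> = max (Mx X n \<omega>) (X (Suc n) \<omega>)"
proof -
  let ?S = "(\<lambda>i. X i \<omega>) ` {1..n}"
  have "{1..Suc n} = insert (Suc n) {1..n}" by auto
  then have e: "(\<lambda>i. X i \<omega>) ` {1..Suc n} = insert (X (Suc n) \<omega>) ?S" by simp
  have "Mx X (Suc n) \<omega> = Max (insert (X (Suc n) \<omega>) (insert 0 ?S))"
    unfolding Mx_def e by (simp only: insert_commute)
  also have "\<dots> = max (X (Suc n) \<omega>) (Max (insert 0 ?S))"
    by (rule Max_insert) auto
  finally show ?thesis by (simp add: Mx_def max.commute)
qed

lemma Mx_0: "Mx X 0 \<omega> = 0" by (simp add: Mx_def)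

lemma Mx_meas:
  assumes "\<And>i. i \<in> {1..n} \<Longrightarrow> X i \<in> measurable N (count_space UNIV)"
  shows "Mx X n \<in> measurable N (count_space UNIV)"
  using assms
proof (induction n)
  case 0 then show ?case by (simp add: Mx_0[abs_def])
next
  case (Suc n)
  have a: "Mx X n \<in> measurable N (count_space UNIV)" using Suc by auto
  have b: "X (Suc n) \<in> measurable N (count_space UNIV)" using Suc by auto
  have "(\<lambda>\<omega>. max (Mx X n \<omega>) (X (Suc n) \<omega>)) \<in> measurable N (count_space UNIV)"
    using a b by measurable
  then show ?case by (simp add: Mx_Suc[abs_def])
qed

lemma cond_exp_main:
  fixes M :: "'a measure" and X :: "nat \<Rightarrow> 'a \<Rightarrow> nat" and p :: "nat \<Rightarrow> real"
    and c :: "nat \<Rightarrow> nat \<Rightarrow> ennreal"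
  assumes PS: "prob_space M"
    and Xm: "\<And>n. n \<ge> 1 \<Longrightarrow> X n \<in> measurable M (count_space UNIV)"
    and ind: "prob_space.indep_vars M (\<lambda>_. count_space UNIV) X {1..}"
    and dis: "\<And>n. n \<ge> 1 \<Longrightarrow> distr M (count_space UNIV) (X n) = distr M (count_space UNIV) (X 1)"
    and pdef: "\<And>k. p k = measure M {\<omega> \<in> space M. X 1 \<omega> = k}"
    and k1: "k \<ge> 1"
  shows "AE \<omega> in M. (\<integral>\<^sup>+x. ennreal (p x) * c (Mx X (k - 1) \<omega>) x \<partial>count_space UNIV)
           = nn_cond_exp M (natfilt M X (k - 1)) (\<lambda>\<omega>. c (Mx X (k - 1) \<omega>) (X k \<omega>)) \<omega>"
proof -
  interpret prob_space M by (rule PS)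
  define n where "n = k - 1"
  have kn: "k = Suc n" using k1 by (simp add: n_def)
  define G where "G = (\<Union>i\<in>{1..n}. {X i -` A \<inter> space M | A. True})"
  have Gsub: "G \<subseteq> sets M"
  proof
    fix S assume "S \<in> G"
    then obtain i A where i: "i \<in> {1..n}" and S: "S = X i -` A \<inter> space M" unfolding G_def by blast
    have "X i \<in> measurable M (count_space UNIV)" using Xm i by simp
    then show "S \<in> sets M" unfolding S by (rule measurable_sets) simp
  qed
  then have GPow: "G \<subseteq> Pow (space M)" using sets.sets_into_space by blast
  define F where "F = natfilt M X n"
  have spF: "space F = space M" unfolding F_def natfilt_def G_def[symmetric] using GPow by simp
  have setsF: "sets F = sigma_sets (space M) G" unfolding F_def natfilt_def G_def[symmetric] using GPow by simp
  have subalg: "subalgebra M F"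
    unfolding subalgebra_def spF setsF using Gsub by (simp add: sets.sigma_sets_subset)
  interpret fms: finite_measure_subalgebra M F
    by unfold_locales (rule subalg)
  have XF: "X i \<in> measurable F (count_space UNIV)" if "i \<in> {1..n}" for i
  proof (rule measurableI)
    fix A :: "nat set"
    have "X i -` A \<inter> space M \<in> G" unfolding G_def using that by blast
    then show "X i -` A \<inter> space F \<in> sets F" unfolding spF setsF by auto
  qed auto
  have MF: "Mx X n \<in> measurable F (count_space UNIV)" by (rule Mx_meas) (rule XF)
  have MM: "Mx X n \<in> measurable M (count_space UNIV)" by (rule Mx_meas) (use Xm in auto)
  have XkM: "X k \<in> measurable M (count_space UNIV)" using Xm k1 by simp
  define E where "E i = {X i -` A \<inter> space M | A. A \<in> sets (count_space (UNIV::nat set))}" for i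
  define I where "I = case_bool {1..n} {k}"
  have "indep_sets E {1..}" using ind unfolding indep_vars_def2 E_def by simp
  then have indE: "indep_sets E (\<Union>j\<in>UNIV. I j)"
    by (rule indep_sets_mono_index[rotated]) (auto simp: I_def kn split: bool.splits)
  have "indep_sets (\<lambda>j. sigma_sets (space M) (\<Union>i\<in>I j. E i)) UNIV"
  proof (rule indep_sets_collect_sigma[OF indE])
    fix i j
    show "Int_stable (E i)"
      unfolding E_def Int_stable_def
      apply auto
      apply (rule_tac x="A \<inter> Aa" in exI)
      apply auto
      done
  next
    show "disjoint_family_on I UNIV"
      unfolding disjoint_family_on_def I_def by (auto simp: kn split: bool.split)
  qed
  then have indFX: "indep_set (sigma_sets (space M) (\<Union>i\<in>{1..n}. E i)) (sigma_sets (space M) (E k))"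
  proof -
    have "(\<lambda>j. sigma_sets (space M) (\<Union>i\<in>I j. E i))
        = case_bool (sigma_sets (space M) (\<Union>i\<in>{1..n}. E i)) (sigma_sets (space M) (E k))"
    proof (rule ext)
      fix j show "sigma_sets (space M) (\<Union>i\<in>I j. E i)
        = case_bool (sigma_sets (space M) (\<Union>i\<in>{1..n}. E i)) (sigma_sets (space M) (E k)) j"
        by (cases j) (simp_all add: I_def)
    qed
    then show ?thesis using \<open>indep_sets (\<lambda>j. sigma_sets (space M) (\<Union>i\<in>I j. E i)) UNIV\<close>
      unfolding indep_set_def by simp
  qed
  have UE: "(\<Union>i\<in>{1..n}. E i) = G" unfolding E_def G_def by simp
  have Pk: "measure M (X k -` {x} \<inter> space M) = p x" for x
  proof -
    have "measure M (X k -` {x} \<inter> space M) = measure (distr M (count_space UNIV) (X k)) {x}"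
      using XkM by (simp add: measure_distr)
    also have "\<dots> = measure (distr M (count_space UNIV) (X 1)) {x}" by (simp only: dis[OF k1])
    also have "\<dots> = measure M (X 1 -` {x} \<inter> space M)" using Xm[of 1] by (simp add: measure_distr)
    also have "\<dots> = p x" by (simp add: pdef vimage_def Int_def conj_commute)
    finally show ?thesis .
  qed
  have indep_event: "emeasure M (A \<inter> X k -` {x}) = emeasure M A * ennreal (p x)" if A: "A \<in> sets F" for A x
  proof -
    have AM: "A \<in> sets M" using A subalg by (auto simp: subalgebra_def)
    have "A \<in> sigma_sets (space M) (\<Union>i\<in>{1..n}. E i)" using A unfolding UE setsF by simp
    moreover have "X k -` {x} \<inter> space M \<in> sigma_sets (space M) (E k)"
      unfolding E_def by (intro sigma_sets.Basic) auto
    ultimately have "prob (A \<inter> (X k -` {x} \<inter> space M)) = prob A * prob (X k -` {x} \<inter> space M)"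
      by (rule indep_setD[OF indFX])
    moreover have "A \<inter> (X k -` {x} \<inter> space M) = A \<inter> X k -` {x}"
      using sets.sets_into_space[OF AM] by auto
    ultimately have "prob (A \<inter> X k -` {x}) = prob A * p x" using Pk by simp
    moreover have "A \<inter> X k -` {x} \<in> sets M"
      using \<open>A \<inter> (X k -` {x} \<inter> space M) = A \<inter> X k -` {x}\<close>[symmetric] AM XkM
      by (auto simp: measurable_count_space_eq2_countable)
    moreover have "p x \<ge> 0" by (simp add: pdef)
    ultimately show ?thesis using AM
      by (simp add: emeasure_eq_measure ennreal_mult)
  qed
  define H where "H m = (\<integral>\<^sup>+x. ennreal (p x) * c m x \<partial>count_space UNIV)" for m
  have indep_int: "(\<integral>\<^sup>+\<omega>. indicator A \<omega> * c m (X k \<omega>) \<partial>M) = emeasure M A * H m"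
    if A: "A \<in> sets F" for A m
  proof -
    have AM: "A \<in> sets M" using A subalg by (auto simp: subalgebra_def)
    have "(\<integral>\<^sup>+\<omega>. indicator A \<omega> * c m (X k \<omega>) \<partial>M)
        = (\<integral>\<^sup>+x. (\<integral>\<^sup>+\<omega>. indicator (A \<inter> X k -` {x}) \<omega> * c m x \<partial>M) \<partial>count_space UNIV)"
      by (rule nn_integral_split_countable[OF XkM AM, where \<Phi>="\<lambda>x \<omega>. c m x"]) simp
    also have "\<dots> = (\<integral>\<^sup>+x. emeasure M A * (ennreal (p x) * c m x) \<partial>count_space UNIV)"
    proof (rule nn_integral_cong)
      fix x
      have s: "A \<inter> X k -` {x} \<in> sets M"
      proof -
        have "A \<inter> X k -` {x} = A \<inter> (X k -` {x} \<inter> space M)" using sets.sets_into_space[OF AM] by auto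
        then show ?thesis using AM XkM by (auto simp: measurable_count_space_eq2_countable)
      qed
      have "(\<integral>\<^sup>+\<omega>. indicator (A \<inter> X k -` {x}) \<omega> * c m x \<partial>M) = c m x * emeasure M (A \<inter> X k -` {x})"
        using nn_integral_cmult_indicator[OF s, of "c m x"] by (simp add: mult.commute)
      also have "\<dots> = emeasure M A * (ennreal (p x) * c m x)"
        using indep_event[OF A] by (simp add: ac_simps)
      finally show "(\<integral>\<^sup>+\<omega>. indicator (A \<inter> X k -` {x}) \<omega> * c m x \<partial>M) = emeasure M A * (ennreal (p x) * c m x)" .
    qed
    also have "\<dots> = emeasure M A * H m"
      unfolding H_def by (rule nn_integral_cmult) simp
    finally show ?thesis .
  qed
  have "AE \<omega> in M. H (Mx X n \<omega>) = nn_cond_exp M F (\<lambda>\<omega>. c (Mx X n \<omega>) (X k \<omega>)) \<omega>"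
  proof (rule fms.nn_cond_exp_charact)
    show "(\<lambda>\<omega>. c (Mx X n \<omega>) (X k \<omega>)) \<in> borel_measurable M"
    proof (rule measurable_compose_countable[where g = "Mx X n" and f = "\<lambda>m \<omega>. c m (X k \<omega>)"])
      fix m show "(\<lambda>\<omega>. c m (X k \<omega>)) \<in> borel_measurable M"
        by (rule measurable_compose[OF XkM]) simp
    qed (rule MM)
    show "(\<lambda>\<omega>. H (Mx X n \<omega>)) \<in> borel_measurable F"
      by (rule measurable_compose[OF MF]) simp
    fix A assume A: "A \<in> sets F"
    have AM: "A \<in> sets M" using A subalg by (auto simp: subalgebra_def)
    have AW: "A \<inter> Mx X n -` {m} \<in> sets F" for m
    proof -
      have "A \<inter> Mx X n -` {m} = A \<inter> (Mx X n -` {m} \<inter> space F)"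
        using sets.sets_into_space[OF A] by auto
      then show ?thesis using A MF by (auto simp: measurable_count_space_eq2_countable)
    qed
    have "(\<integral>\<^sup>+\<omega>\<in>A. c (Mx X n \<omega>) (X k \<omega>) \<partial>M) = (\<integral>\<^sup>+\<omega>. indicator A \<omega> * c (Mx X n \<omega>) (X k \<omega>) \<partial>M)"
      by (simp add: mult.commute)
    also have "\<dots> = (\<integral>\<^sup>+m. (\<integral>\<^sup>+\<omega>. indicator (A \<inter> Mx X n -` {m}) \<omega> * c m (X k \<omega>) \<partial>M) \<partial>count_space UNIV)"
      by (rule nn_integral_split_countable[OF MM AM, where \<Phi>="\<lambda>m \<omega>. c m (X k \<omega>)"])
         (rule measurable_compose[OF XkM], simp)
    also have "\<dots> = (\<integral>\<^sup>+m. emeasure M (A \<inter> Mx X n -` {m}) * H m \<partial>count_space UNIV)"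
      by (rule nn_integral_cong) (rule indep_int[OF AW])
    also have "\<dots> = (\<integral>\<^sup>+m. (\<integral>\<^sup>+\<omega>. indicator (A \<inter> Mx X n -` {m}) \<omega> * H m \<partial>M) \<partial>count_space UNIV)"
    proof (rule nn_integral_cong)
      fix m
      have s: "A \<inter> Mx X n -` {m} \<in> sets M" using AW[of m] subalg by (auto simp: subalgebra_def)
      show "emeasure M (A \<inter> Mx X n -` {m}) * H m = (\<integral>\<^sup>+\<omega>. indicator (A \<inter> Mx X n -` {m}) \<omega> * H m \<partial>M)"
        using nn_integral_cmult_indicator[OF s, of "H m"] by (simp add: mult.commute)
    qed
    also have "\<dots> = (\<integral>\<^sup>+\<omega>. indicator A \<omega> * H (Mx X n \<omega>) \<partial>M)"
      by (rule nn_integral_split_countable[OF MM AM, where \<Phi>="\<lambda>m \<omega>. H m", symmetric]) simp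
    also have "\<dots> = (\<integral>\<^sup>+\<omega>\<in>A. H (Mx X n \<omega>) \<partial>M)" by (simp add: mult.commute)
    finally show "(\<integral>\<^sup>+\<omega>\<in>A. c (Mx X n \<omega>) (X k \<omega>) \<partial>M) = (\<integral>\<^sup>+\<omega>\<in>A. H (Mx X n \<omega>) \<partial>M)" .
  qed
  then show ?thesis unfolding H_def F_def n_def by simp
qed



theorem proposition2p3:
  fixes M :: "'a measure" and X :: "nat \<Rightarrow> 'a \<Rightarrow> nat" and p :: "nat \<Rightarrow> real" and \<delta> :: int
  assumes "prob_space M"
    and "\<And>n. n \<ge> 1 \<Longrightarrow> X n \<in> measurable M (count_space UNIV)"
    and "prob_space.indep_vars M (\<lambda>_. count_space UNIV) X {1..}"
    and "\<And>n. n \<ge> 1 \<Longrightarrow> distr M (count_space UNIV) (X n) = distr M (count_space UNIV) (X 1)"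
    and "\<And>k. p k = measure M {\<omega> \<in> space M. X 1 \<omega> = k}"
    and "\<And>k. p k > 0"
  shows "\<exists>C>0.
     ((\<delta> < 0 \<and> limsup (\<lambda>k. ereal (rr p k)) < 1) \<longrightarrow>
        (\<forall>k\<ge>1. AE \<omega> in M. nn_cond_exp M (natfilt M X (k - 1)) (\<lambda>\<omega>. ennreal (\<bar>xi p X \<delta> k \<omega>\<bar> ^ 3)) \<omega>
                  \<le> ennreal (C * ytail p (int (Mx X (k - 1) \<omega>))))) \<and>
     ((\<delta> < 0 \<and> (rr p \<longlonglongrightarrow> 1) \<and> ((\<lambda>k. (1 - rr p (Suc k)) / (1 - rr p k)) \<longlonglongrightarrow> 1)) \<longrightarrow>
        (\<forall>k\<ge>1. AE \<omega> in M. nn_cond_exp M (natfilt M X (k - 1)) (\<lambda>\<omega>. ennreal (\<bar>xi p X \<delta> k \<omega>\<bar> ^ 3)) \<omega>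
                  \<le> ennreal (C * ytail p (int (Mx X (k - 1) \<omega>) + 3 * \<delta>)))) \<and>
     (\<delta> > 0 \<longrightarrow>
        (\<forall>k\<ge>1. AE \<omega> in M. nn_cond_exp M (natfilt M X (k - 1)) (\<lambda>\<omega>. ennreal (\<bar>xi p X \<delta> k \<omega>\<bar> ^ 3)) \<omega>
                  \<le> ennreal (C * ytail p (int (Mx X (k - 1) \<omega>) + \<delta>))))"
proof -
  interpret prob_space M by (rule assms(1))
  have Xm: "\<And>n. n \<ge> 1 \<Longrightarrow> X n \<in> measurable M (count_space UNIV)" by (rule assms(2))
  have psums: "p sums 1"
  proof -
    define A where "A k = X 1 -` {k} \<inter> space M" for k
    have X1: "X 1 \<in> measurable M (count_space UNIV)" using Xm by simp
    have "range A \<subseteq> sets M" unfolding A_def using X1 by (auto intro: measurable_sets)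
    moreover have "disjoint_family A" unfolding A_def disjoint_family_on_def by auto
    ultimately have "(\<lambda>i. measure M (A i)) sums (measure M (\<Union>i. A i))" by (rule finite_measure_UNION)
    moreover have "(\<Union>i. A i) = space M" unfolding A_def by auto
    moreover have "measure M (A i) = p i" for i
      unfolding A_def assms(5) by (simp add: vimage_def Int_def conj_commute)
    ultimately show ?thesis by (simp add: prob_space)
  qed
  interpret pd: pdist p by unfold_locales (use assms(6) psums in auto)
  define H where "H m = (\<Sum>x. ennreal (p x * \<bar>pd.GG \<delta> m x\<bar> ^ 3))" for m
  have key: "AE \<omega> in M. nn_cond_exp M (natfilt M X (k - 1)) (\<lambda>\<omega>. ennreal (\<bar>xi p X \<delta> k \<omega>\<bar> ^ 3)) \<omega>
      = H (Mx X (k - 1) \<omega>)" if k: "k \<ge> 1" for k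
  proof -
    have xi_eq: "(\<lambda>\<omega>. ennreal (\<bar>xi p X \<delta> k \<omega>\<bar> ^ 3)) = (\<lambda>\<omega>. (\<lambda>m x. ennreal (\<bar>pd.GG \<delta> m x\<bar> ^ 3)) (Mx X (k - 1) \<omega>) (X k \<omega>))"
    proof (rule ext)
      fix \<omega>
      have "Mx X k \<omega> = max (Mx X (k - 1) \<omega>) (X k \<omega>)" using k Mx_Suc[of X "k - 1" \<omega>] by simp
      then have "xi p X \<delta> k \<omega> = pd.GG \<delta> (Mx X (k - 1) \<omega>) (X k \<omega>)"
        unfolding xi_def pd.GG_def pd.DD_def Ik_def by (simp add: max.commute)
      then show "ennreal (\<bar>xi p X \<delta> k \<omega>\<bar> ^ 3) = (\<lambda>m x. ennreal (\<bar>pd.GG \<delta> m x\<bar> ^ 3)) (Mx X (k - 1) \<omega>) (X k \<omega>)"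
        by simp
    qed
    have Heq: "(\<integral>\<^sup>+x. ennreal (p x) * ennreal (\<bar>pd.GG \<delta> m x\<bar> ^ 3) \<partial>count_space UNIV) = H m" for m
      unfolding H_def nn_integral_count_space_nat
      by (rule suminf_cong) (use assms(6) in \<open>simp add: ennreal_mult less_imp_le\<close>)
    have "AE \<omega> in M. (\<integral>\<^sup>+x. ennreal (p x) * ennreal (\<bar>pd.GG \<delta> (Mx X (k - 1) \<omega>) x\<bar> ^ 3) \<partial>count_space UNIV)
        = nn_cond_exp M (natfilt M X (k - 1)) (\<lambda>\<omega>. (\<lambda>m x. ennreal (\<bar>pd.GG \<delta> m x\<bar> ^ 3)) (Mx X (k - 1) \<omega>) (X k \<omega>)) \<omega>"
      by (rule cond_exp_main[OF assms(1-5) k])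
    then show ?thesis unfolding xi_eq Heq by (auto elim: AE_mp)
  qed
  have fin: "\<forall>k\<ge>1. AE \<omega> in M. nn_cond_exp M (natfilt M X (k - 1)) (\<lambda>\<omega>. ennreal (\<bar>xi p X \<delta> k \<omega>\<bar> ^ 3)) \<omega>
      \<le> ennreal (CC * B (Mx X (k - 1) \<omega>))"
    if hb: "\<And>m. H m \<le> ennreal (Cx * B m)" and CCle: "Cx \<le> CC" and B0: "\<And>m. B m \<ge> 0" for Cx CC :: real and B
  proof (intro allI impI)
    fix k :: nat assume k: "k \<ge> 1"
    show "AE \<omega> in M. nn_cond_exp M (natfilt M X (k - 1)) (\<lambda>\<omega>. ennreal (\<bar>xi p X \<delta> k \<omega>\<bar> ^ 3)) \<omega>
      \<le> ennreal (CC * B (Mx X (k - 1) \<omega>))"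
      using key[OF k]
    proof (rule AE_mp, intro AE_I2 impI)
      fix \<omega> assume e: "nn_cond_exp M (natfilt M X (k - 1)) (\<lambda>\<omega>. ennreal (\<bar>xi p X \<delta> k \<omega>\<bar> ^ 3)) \<omega> = H (Mx X (k - 1) \<omega>)"
      have "H (Mx X (k - 1) \<omega>) \<le> ennreal (Cx * B (Mx X (k - 1) \<omega>))" by (rule hb)
      also have "\<dots> \<le> ennreal (CC * B (Mx X (k - 1) \<omega>))"
        by (rule ennreal_leI, rule mult_right_mono[OF CCle B0])
      finally show "nn_cond_exp M (natfilt M X (k - 1)) (\<lambda>\<omega>. ennreal (\<bar>xi p X \<delta> k \<omega>\<bar> ^ 3)) \<omega> \<le> ennreal (CC * B (Mx X (k - 1) \<omega>))"
        using e by simp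
    qed
  qed
  obtain Ca where Ca: "Ca > 0" and hCa: "\<delta> < 0 \<and> limsup (\<lambda>k. ereal (rr p k)) < 1 \<Longrightarrow> \<forall>m. H m \<le> ennreal (Ca * ytail p (int m))"
  proof (cases "\<delta> < 0 \<and> limsup (\<lambda>k. ereal (rr p k)) < 1")
    case True
    then obtain C where "C > 0" "\<forall>m. H m \<le> ennreal (C * ytail p (int m))"
      using pd.case_a[of \<delta>] unfolding H_def by blast
    then show ?thesis using that by blast
  next
    case False show ?thesis by (rule that[of 1]) (use False in auto)
  qed
  obtain Cb where Cb: "Cb > 0" and hCb: "\<delta> < 0 \<and> (rr p \<longlonglongrightarrow> 1) \<and> ((\<lambda>k. (1 - rr p (Suc k)) / (1 - rr p k)) \<longlonglongrightarrow> 1)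
      \<Longrightarrow> \<forall>m. H m \<le> ennreal (Cb * ytail p (int m + 3 * \<delta>))"
  proof (cases "\<delta> < 0 \<and> (rr p \<longlonglongrightarrow> 1) \<and> ((\<lambda>k. (1 - rr p (Suc k)) / (1 - rr p k)) \<longlonglongrightarrow> 1)")
    case True
    then obtain C where "C > 0" "\<forall>m. H m \<le> ennreal (C * ytail p (int m + 3 * \<delta>))"
      using pd.case_b[of \<delta>] unfolding H_def by blast
    then show ?thesis using that by blast
  next
    case False show ?thesis by (rule that[of 1]) (use False in auto)
  qed
  have hCc: "\<delta> > 0 \<Longrightarrow> \<forall>m. H m \<le> ennreal (7 * ytail p (int m + \<delta>))"
    unfolding H_def using pd.case_c by blast
  define C where "C = max Ca (max Cb 7)"
  have yt0: "\<And>j. ytail p j \<ge> 0" using pd.ytail_pos less_imp_le by blast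
  show ?thesis
  proof (intro exI[of _ C] conjI impI)
    show "C > 0" unfolding C_def using Ca by simp
  next
    assume h: "\<delta> < 0 \<and> limsup (\<lambda>k. ereal (rr p k)) < 1"
    show "\<forall>k\<ge>1. AE \<omega> in M. nn_cond_exp M (natfilt M X (k - 1)) (\<lambda>\<omega>. ennreal (\<bar>xi p X \<delta> k \<omega>\<bar> ^ 3)) \<omega>
                  \<le> ennreal (C * ytail p (int (Mx X (k - 1) \<omega>)))"
      by (rule fin[of Ca "\<lambda>m. ytail p (int m)" C]) (use hCa[OF h] yt0 in \<open>auto simp: C_def\<close>)
  next
    assume h: "\<delta> < 0 \<and> (rr p \<longlonglongrightarrow> 1) \<and> ((\<lambda>k. (1 - rr p (Suc k)) / (1 - rr p k)) \<longlonglongrightarrow> 1)"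
    show "\<forall>k\<ge>1. AE \<omega> in M. nn_cond_exp M (natfilt M X (k - 1)) (\<lambda>\<omega>. ennreal (\<bar>xi p X \<delta> k \<omega>\<bar> ^ 3)) \<omega>
                  \<le> ennreal (C * ytail p (int (Mx X (k - 1) \<omega>) + 3 * \<delta>))"
      by (rule fin[of Cb "\<lambda>m. ytail p (int m + 3 * \<delta>)" C]) (use hCb[OF h] yt0 in \<open>auto simp: C_def\<close>)
  next
    assume h: "\<delta> > 0"
    show "\<forall>k\<ge>1. AE \<omega> in M. nn_cond_exp M (natfilt M X (k - 1)) (\<lambda>\<omega>. ennreal (\<bar>xi p X \<delta> k \<omega>\<bar> ^ 3)) \<omega>
                  \<le> ennreal (C * ytail p (int (Mx X (k - 1) \<omega>) + \<delta>))"
      by (rule fin[of 7 "\<lambda>m. ytail p (int m + \<delta>)" C]) (use hCc[OF h] yt0 in \<open>auto simp: C_def\<close>)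
  qed
qed

end
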